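(* Let $d,e\ge2$ be integers. There exists a quasi-symmetric homeomorphism $\phi:\mathbb S^1\cong\mathbb R/\mathbb Z\to\mathbb S^1$ that maps the set of $d$-adic rationals $\{p/d^n: p,n\in\mathbb Z_{\ge0}\}$ (mod $1$) onto the set of $e$-adic rationals $\{q/e^m: q,m\in\mathbb Z_{\ge0}\}$ (mod $1$). *)

theory Defs
  imports "HOL-Analysis.Analysis"
begin

text \<open>The circle S^1 = R/Z, realised as the unit circle in the complex plane via
  x mod 1 corresponds to cis (2 pi x).  The chordal metric is bi-Lipschitz equivalent
  to the quotient metric of R/Z, so quasi-symmetry does not depend on this choice.\<close>

definition circle :: "complex set" where
  "circle = sphere 0 1"

definition adic_points :: "nat \<Rightarrow> complex set" where
  "adic_points d = {cis (2 * pi * (real p / real d ^ n)) | p n :: nat. True}"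

definition control_function :: "(real \<Rightarrow> real) \<Rightarrow> bool" where
  "control_function \<eta> \<longleftrightarrow> (\<exists>\<eta>'. homeomorphism {0..} {0..} \<eta> \<eta>')"

definition quasisymmetric_on :: "'a::metric_space set \<Rightarrow> ('a \<Rightarrow> 'b::metric_space) \<Rightarrow> bool" where
  "quasisymmetric_on S f \<longleftrightarrow>
     (\<exists>\<eta>. control_function \<eta> \<and>
        (\<forall>x\<in>S. \<forall>a\<in>S. \<forall>b\<in>S. \<forall>t\<ge>0.
            dist x a \<le> t * dist x b \<longrightarrow> dist (f x) (f a) \<le> \<eta> t * dist (f x) (f b)))"

end

theory Submission
  imports Defs
begin


definition Inv :: "real \<Rightarrow> (real \<times> real) set \<Rightarrow> bool" where
  "Inv r P \<longleftrightarrow> (\<forall>a a' b b'. (a,a') \<in> P \<longrightarrow> (b,b') \<in> P \<longrightarrow> a \<le> b \<longrightarrow>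
      a' \<le> b' \<and> r * (b - a) \<le> b' - a' \<and> r * (b' - a') \<le> b - a)"

lemma InvD:
  assumes "Inv r P" "(a,a') \<in> P" "(b,b') \<in> P" "a \<le> b"
  shows "a' \<le> b'" "r * (b - a) \<le> b' - a'" "r * (b' - a') \<le> b - a"
  using assms unfolding Inv_def by blast+

lemma Inv_mono:
  assumes "Inv r P" "0 \<le> r'" "r' \<le> r"
  shows "Inv r' P"
  unfolding Inv_def
proof (intro allI impI conjI)
  fix a a' b b' assume h: "(a,a') \<in> P" "(b,b') \<in> P" "a \<le> b"
  from InvD[OF assms(1) h] show "a' \<le> b'" "r' * (b - a) \<le> b' - a'" "r' * (b' - a') \<le> b - a"
    using h(3) assms(2,3) mult_right_mono[of r' r "b-a"] mult_right_mono[of r' r "b'-a'"] by auto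
qed

definition sw :: "real \<times> real \<Rightarrow> real \<times> real" where "sw p = (snd p, fst p)"

lemma sw_sw[simp]: "sw (sw p) = p" by (simp add: sw_def)
lemma sw_img_img[simp]: "sw ` sw ` P = P" by (simp add: image_image)
lemma sw_mem[simp]: "((a,b) \<in> sw ` P) = ((b,a) \<in> P)"
  by (force simp: sw_def image_iff)

lemma Inv_sw_1:
  assumes "Inv r P" "0 < r"
  shows "Inv r (sw ` P)"
  unfolding Inv_def
proof (intro allI impI)
  fix a a' b b' assume h: "(a,a') \<in> sw ` P" "(b,b') \<in> sw ` P" "a \<le> b"
  then have h1: "(a',a) \<in> P" "(b',b) \<in> P" by auto
  show "a' \<le> b' \<and> r * (b - a) \<le> b' - a' \<and> r * (b' - a') \<le> b - a"
  proof (cases "a' \<le> b'")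
    case True
    from InvD[OF assms(1) h1 True] show ?thesis using True by auto
  next
    case False
    from InvD[OF assms(1) h1(2,1)] False have "r * (a' - b') \<le> a - b" by auto
    moreover have "r * (a' - b') > 0" using False assms(2) by simp
    ultimately show ?thesis using h(3) by auto
  qed
qed

lemma Inv_sw: "0 < r \<Longrightarrow> Inv r (sw ` P) = Inv r P"
  using Inv_sw_1[of r P] Inv_sw_1[of r "sw ` P"] by auto

lemma arith_step:
  fixes r r' X Z W :: real
  assumes "0 < r'" "r' < r" "r \<le> 1" "X > 0" "r * X \<le> Z" "r * Z \<le> X" "\<bar>W - Z\<bar> \<le> (r - r') * X"
  shows "r' * X \<le> W" "r' * W \<le> X"
proof -
  have "W \<ge> Z - (r - r') * X" using assms(7) by linarith
  moreover have "Z - (r - r') * X \<ge> r' * X" using assms(5) by (simp add: algebra_simps)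
  ultimately show "r' * X \<le> W" by linarith
  have W: "W \<le> Z + (r - r') * X" using assms(7) by linarith
  have a: "r' * W \<le> r' * Z + r' * ((r - r') * X)" using mult_left_mono[OF W, of r'] assms(1)
    by (simp add: algebra_simps)
  have b: "r' * Z = r * Z - (r - r') * Z" by (simp add: algebra_simps)
  have c: "(r - r') * Z \<ge> (r - r') * (r' * X)"
    using assms by (intro mult_left_mono) (auto intro: order_trans[OF mult_right_mono[of r' r X]])
  have "r' * W \<le> r * Z - (r - r') * (r' * X) + r' * ((r - r') * X)" using a b c by linarith
  also have "\<dots> = r * Z" by (simp add: algebra_simps)
  finally have "r' * W \<le> r * Z" .
  then show "r' * W \<le> X" using assms(6) by linarith
qed

definition dense01 :: "real set \<Rightarrow> bool" where
  "dense01 S \<longleftrightarrow> (\<forall>u v. 0 \<le> u \<longrightarrow> u < v \<longrightarrow> v \<le> 1 \<longrightarrow> (\<exists>y\<in>S. u < y \<and> y < v))"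

lemma extend:
  fixes P :: "(real \<times> real) set"
  assumes fin: "finite P" and inv: "Inv r P" and P0: "(0,0) \<in> P" and P1: "(1,1) \<in> P"
    and r: "0 < r'" "r' < r" "r \<le> 1" and x: "0 < x" "x < 1" and xn: "x \<notin> fst ` P"
    and dS: "dense01 S"
  shows "\<exists>y\<in>S. Inv r' (insert (x,y) P)"
proof -
  define L where "L = {p \<in> fst ` P. p < x}"
  define U where "U = {p \<in> fst ` P. x < p}"
  have L0: "0 \<in> L" unfolding L_def using P0 x by (simp add: rev_image_eqI)
  have U1: "1 \<in> U" unfolding U_def using P1 x by (simp add: rev_image_eqI)
  have finL: "finite L" "L \<noteq> {}" using fin L0 unfolding L_def by (simp, blast)
  have finU: "finite U" "U \<noteq> {}" using fin U1 unfolding U_def by (simp, blast)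
  define a where "a = Max L"
  define b where "b = Min U"
  have aL: "a \<in> L" unfolding a_def using finL by simp
  have bU: "b \<in> U" unfolding b_def using finU by simp
  have a0: "0 \<le> a" unfolding a_def using finL L0 by simp
  have b1: "b \<le> 1" unfolding b_def using finU U1 by simp
  have ax: "a < x" using aL by (simp add: L_def)
  have xb: "x < b" using bU by (simp add: U_def)
  obtain a' where aa: "(a,a') \<in> P" using aL unfolding L_def by force
  obtain b' where bb: "(b,b') \<in> P" using bU unfolding U_def by force
  have below: "p \<le> a" if "(p,p') \<in> P" "p < x" for p p'
    unfolding a_def using finL that by (intro Max_ge) (auto simp: L_def intro!: image_eqI[of p fst "(p,p')"])
  have above: "b \<le> p" if "(p,p') \<in> P" "x < p" for p p'
    unfolding b_def using finU that by (intro Min_le) (auto simp: U_def intro!: image_eqI[of p fst "(p,p')"])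
  have neq: "p \<noteq> x" if "(p,p') \<in> P" for p p'
    using xn that by (force intro: image_eqI[of p fst "(p,p')"])
  have ab1: "r * (b - a) \<le> b' - a'" and ab2: "r * (b' - a') \<le> b - a"
    using InvD[OF inv aa bb] ax xb by auto
  have a'0: "0 \<le> a'" using InvD(1)[OF inv P0 aa a0] .
  have b'1: "b' \<le> 1" using InvD(1)[OF inv bb P1 b1] .
  define s where "s = (b' - a') / (b - a)"
  have ba: "b - a > 0" using ax xb by simp
  have s1: "r \<le> s" unfolding s_def using ab1 ba by (simp add: field_simps)
  have s2: "r * s \<le> 1" unfolding s_def using ab2 ba by (simp add: field_simps)
  have spos: "s > 0" using s1 r by simp
  define y0 where "y0 = a' + s * (x - a)"
  have y0a: "a' < y0" unfolding y0_def using spos ax by simp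
  have y0b: "y0 < b'"
  proof -
    have "s * (x - a) < s * (b - a)" using spos xb by simp
    also have "s * (b - a) = b' - a'" unfolding s_def using ba by simp
    finally show ?thesis unfolding y0_def by simp
  qed
  define m where "m = min (x - a) (b - x)"
  have mpos: "m > 0" unfolding m_def using ax xb by simp
  define \<delta> where "\<delta> = (r - r') * m"
  have dpos: "\<delta> > 0" unfolding \<delta>_def using mpos r by simp
  have "\<exists>y\<in>S. max a' (y0 - \<delta>) < y \<and> y < min b' (y0 + \<delta>)"
    using dS unfolding dense01_def
  proof (elim allE impE)
    show "0 \<le> max a' (y0 - \<delta>)" using a'0 by simp
    show "max a' (y0 - \<delta>) < min b' (y0 + \<delta>)" using y0a y0b dpos ab1 ba r
      by (smt (verit) mult_pos_pos)
    show "min b' (y0 + \<delta>) \<le> 1" using b'1 by simp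
  qed
  then obtain y where yS: "y \<in> S" and y1: "max a' (y0 - \<delta>) < y" and y2: "y < min b' (y0 + \<delta>)"
    by blast
  have yd: "\<bar>y - y0\<bar> \<le> \<delta>" using y1 y2 by auto
  have Xm: "(r - r') * m \<le> (r - r') * \<bar>x - p\<bar>" if "(p,p') \<in> P" for p p'
  proof -
    have "m \<le> \<bar>x - p\<bar>" using below[OF that] above[OF that] neq[OF that] unfolding m_def
      by (cases "p < x") auto
    then show ?thesis using r by (intro mult_left_mono) auto
  qed
  have lowcase: "p' \<le> y \<and> r' * (x - p) \<le> y - p' \<and> r' * (y - p') \<le> x - p"
    if pp: "(p,p') \<in> P" "p < x" for p p'
  proof -
    have pa: "p \<le> a" using below[OF pp] .
    from InvD[OF inv pp(1) aa pa] have i1: "r * (a - p) \<le> a' - p'" "r * (a' - p') \<le> a - p" by auto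
    have i2: "r * (x - a) \<le> s * (x - a)" using s1 ax by (intro mult_right_mono) auto
    have i3: "r * (s * (x - a)) \<le> x - a" using s2 ax mult_right_mono[OF s2, of "x - a"] by (simp add: mult.assoc)
    have Z1: "r * (x - p) \<le> y0 - p'" unfolding y0_def using i1 i2 by (simp add: algebra_simps)
    have Z2: "r * (y0 - p') \<le> x - p" unfolding y0_def using i1 i3 by (simp add: algebra_simps)
    have W: "\<bar>(y - p') - (y0 - p')\<bar> \<le> (r - r') * (x - p)"
      using yd Xm[OF pp(1)] pp(2) unfolding \<delta>_def by auto
    from arith_step[OF r _ Z1 Z2 W] pp(2)
    have "r' * (x - p) \<le> y - p'" "r' * (y - p') \<le> x - p" by auto
    moreover have "0 \<le> r' * (x - p)" using r pp(2) by simp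
    ultimately show ?thesis by linarith
  qed
  have highcase: "y \<le> p' \<and> r' * (p - x) \<le> p' - y \<and> r' * (p' - y) \<le> p - x"
    if pp: "(p,p') \<in> P" "x < p" for p p'
  proof -
    have pb: "b \<le> p" using above[OF pp] .
    from InvD[OF inv bb pp(1) pb] have i1: "r * (p - b) \<le> p' - b'" "r * (p' - b') \<le> p - b" by auto
    have i2: "r * (b - x) \<le> s * (b - x)" using s1 xb by (intro mult_right_mono) auto
    have i3: "r * (s * (b - x)) \<le> b - x" using s2 xb mult_right_mono[OF s2, of "b - x"] by (simp add: mult.assoc)
    have y0': "p' - y0 = (p' - b') + s * (b - x)"
    proof -
      have "s * (b - a) = b' - a'" unfolding s_def using ba by simp
      then show ?thesis unfolding y0_def by (simp add: algebra_simps)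
    qed
    have Z1: "r * (p - x) \<le> p' - y0" unfolding y0' using i1 i2 by (simp add: algebra_simps)
    have Z2: "r * (p' - y0) \<le> p - x" unfolding y0' using i1 i3 by (simp add: algebra_simps)
    have W: "\<bar>(p' - y) - (p' - y0)\<bar> \<le> (r - r') * (p - x)"
      using yd Xm[OF pp(1)] pp(2) unfolding \<delta>_def by auto
    from arith_step[OF r _ Z1 Z2 W] pp(2)
    have "r' * (p - x) \<le> p' - y" "r' * (p' - y) \<le> p - x" by auto
    moreover have "0 \<le> r' * (p - x)" using r pp(2) by simp
    ultimately show ?thesis by linarith
  qed
  have invP': "Inv r' P" using Inv_mono[OF inv] r by simp
  have "Inv r' (insert (x,y) P)"
    unfolding Inv_def
  proof (intro allI impI)
    fix c c' e e' assume h: "(c,c') \<in> insert (x,y) P" "(e,e') \<in> insert (x,y) P" "c \<le> e"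
    show "c' \<le> e' \<and> r' * (e - c) \<le> e' - c' \<and> r' * (e' - c') \<le> e - c"
    proof (cases "(c,c') = (x,y)")
      case True
      show ?thesis
      proof (cases "(e,e') = (x,y)")
        case True2: True
        then show ?thesis using True by simp
      next
        case False
        with h(2) have eP: "(e,e') \<in> P" by blast
        with neq have "e \<noteq> x" by blast
        with h(3) True have "x < e" by simp
        from highcase[OF eP this] True show ?thesis by simp
      qed
    next
      case False
      with h(1) have cP: "(c,c') \<in> P" by blast
      show ?thesis
      proof (cases "(e,e') = (x,y)")
        case True
        have "c \<noteq> x" using neq cP by blast
        with h(3) True have "c < x" by simp
        from lowcase[OF cP this] True show ?thesis by simp
      next
        case False
        with h(2) have eP: "(e,e') \<in> P" by blast
        from InvD[OF invP' cP eP h(3)] show ?thesis by simp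
      qed
    qed
  qed
  then show ?thesis using yS by blast
qed

definition good :: "real \<Rightarrow> (real \<times> real) set \<Rightarrow> bool" where
  "good r P \<longleftrightarrow> finite P \<and> (0,0) \<in> P \<and> (1,1) \<in> P \<and> Inv r P"

definition forth :: "real set \<Rightarrow> real \<Rightarrow> real \<Rightarrow> (real \<times> real) set \<Rightarrow> (real \<times> real) set" where
  "forth S r x P = (if x \<in> fst ` P then P else insert (x, SOME y. y \<in> S \<and> Inv r (insert (x,y) P)) P)"

definition backw :: "real set \<Rightarrow> real \<Rightarrow> real \<Rightarrow> (real \<times> real) set \<Rightarrow> (real \<times> real) set" where
  "backw S r y P = sw ` forth S r y (sw ` P)"

lemma forth_good:
  assumes g: "good r P" and r: "0 < r'" "r' < r" "r \<le> 1" and x: "0 \<le> x" "x \<le> 1" and dS: "dense01 S"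
  shows "good r' (forth S r' x P)" "P \<subseteq> forth S r' x P" "x \<in> fst ` forth S r' x P"
    "forth S r' x P \<subseteq> P \<union> {x} \<times> S"
proof -
  have fin: "finite P" and P0: "(0,0) \<in> P" and P1: "(1,1) \<in> P" and inv: "Inv r P"
    using g by (auto simp: good_def)
  have "good r' (forth S r' x P) \<and> P \<subseteq> forth S r' x P \<and> x \<in> fst ` forth S r' x P \<and>
    forth S r' x P \<subseteq> P \<union> {x} \<times> S"
  proof (cases "x \<in> fst ` P")
    case True
    then show ?thesis using g Inv_mono[OF inv] r unfolding forth_def good_def by auto
  next
    case False
    have "x \<noteq> 0" using False P0 by (force intro: rev_image_eqI)
    moreover have "x \<noteq> 1" using False P1 by (force intro: rev_image_eqI)
    ultimately have x': "0 < x" "x < 1" using x by auto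
    from extend[OF fin inv P0 P1 r x' False dS]
    have "\<exists>y. y \<in> S \<and> Inv r' (insert (x,y) P)" by blast
    from someI_ex[OF this] show ?thesis using False fin P0 P1 unfolding forth_def good_def by auto
  qed
  then show "good r' (forth S r' x P)" "P \<subseteq> forth S r' x P" "x \<in> fst ` forth S r' x P"
    "forth S r' x P \<subseteq> P \<union> {x} \<times> S" by auto
qed

lemma good_sw: "0 < r \<Longrightarrow> good r (sw ` P) = good r P"
proof -
  assume "0 < r"
  have "finite (sw ` P) = finite P"
    using finite_imageI[of P sw] finite_imageI[of "sw ` P" sw] by auto
  then show ?thesis unfolding good_def using Inv_sw[OF \<open>0 < r\<close>] by simp
qed

lemma backw_good:
  assumes g: "good r P" and r: "0 < r'" "r' < r" "r \<le> 1" and y: "0 \<le> y" "y \<le> 1" and dS: "dense01 S"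
  shows "good r' (backw S r' y P)" "P \<subseteq> backw S r' y P" "y \<in> snd ` backw S r' y P"
    "backw S r' y P \<subseteq> P \<union> S \<times> {y}"
proof -
  have g': "good r (sw ` P)" using g good_sw r by simp
  note f = forth_good[OF g' r y dS]
  show "good r' (backw S r' y P)" unfolding backw_def using f(1) good_sw r by simp
  show "P \<subseteq> backw S r' y P" unfolding backw_def using f(2)
    by (metis image_mono sw_img_img)
  show "y \<in> snd ` backw S r' y P" unfolding backw_def using f(3)
    by (force simp: sw_def image_iff)
  show "backw S r' y P \<subseteq> P \<union> S \<times> {y}" unfolding backw_def using f(4)
    by (force simp: sw_def)
qed

definition rr :: "nat \<Rightarrow> real" where "rr k = 1/2 + 1/2^(Suc k)"

lemma rr_props: "0 < rr (Suc k)" "rr (Suc k) < (rr k + rr (Suc k))/2" "(rr k + rr (Suc k))/2 < rr k"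
  "rr k \<le> 1" "(rr k + rr (Suc k))/2 \<le> 1" "1/2 \<le> rr k"
proof -
  have p0: "(0::real) < 2^k" "(1::real) \<le> 2^k" by simp_all
  have p: "(0::real) < 2^k" "(1::real) \<le> 2^k" "(0::real) < 1 + 2*2^k" "3 \<le> 4*(2::real)^k"
    using p0 by linarith+
  show "0 < rr (Suc k)" "rr (Suc k) < (rr k + rr (Suc k))/2" "(rr k + rr (Suc k))/2 < rr k"
    "rr k \<le> 1" "(rr k + rr (Suc k))/2 \<le> 1" "1/2 \<le> rr k"
    unfolding rr_def using p by (auto simp: field_simps)
qed

primrec Pseq :: "real set \<Rightarrow> real set \<Rightarrow> nat \<Rightarrow> (real \<times> real) set" where
  "Pseq D E 0 = {(0,0),(1,1)}"
| "Pseq D E (Suc k) = backw D (rr (Suc k)) (from_nat_into E k)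
      (forth E ((rr k + rr (Suc k))/2) (from_nat_into D k) (Pseq D E k))"

locale setting =
  fixes D E :: "real set"
  assumes cD: "countable D" and cE: "countable E"
    and D01: "D \<subseteq> {0..1}" and E01: "E \<subseteq> {0..1}"
    and D0: "0 \<in> D" "1 \<in> D" and E0: "0 \<in> E" "1 \<in> E"
    and dD: "dense01 D" and dE: "dense01 E"
begin

lemma step:
  assumes g: "good (rr k) P" and PDE: "P \<subseteq> D \<times> E"
  defines "Q \<equiv> backw D (rr (Suc k)) (from_nat_into E k)
      (forth E ((rr k + rr (Suc k))/2) (from_nat_into D k) P)"
  shows "good (rr (Suc k)) Q \<and> Q \<subseteq> D \<times> E \<and> P \<subseteq> Q \<and> from_nat_into D k \<in> fst ` Q
     \<and> from_nat_into E k \<in> snd ` Q"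
proof -
  define P' where "P' = forth E ((rr k + rr (Suc k))/2) (from_nat_into D k) P"
  have xD: "from_nat_into D k \<in> D" using D0 by (intro from_nat_into) auto
  have yE: "from_nat_into E k \<in> E" using E0 by (intro from_nat_into) auto
  have x01: "0 \<le> from_nat_into D k" "from_nat_into D k \<le> 1" using xD D01 by auto
  have y01: "0 \<le> from_nat_into E k" "from_nat_into E k \<le> 1" using yE E01 by auto
  have r1: "0 < (rr k + rr (Suc k))/2" using rr_props(1,2)[of k] by linarith
  note f = forth_good[OF g r1 rr_props(3,4) x01 dE, folded P'_def]
  have Qeq: "Q = backw D (rr (Suc k)) (from_nat_into E k) P'" unfolding Q_def P'_def ..
  note b = backw_good[OF f(1) rr_props(1,2,5) y01 dD, folded Qeq]
  have "Q \<subseteq> D \<times> E" using b(4) f(4) PDE xD yE by blast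
  moreover have "from_nat_into D k \<in> fst ` Q" using f(3) b(2) by blast
  ultimately show ?thesis using b f by blast
qed

lemma Pseq_props:
  "good (rr k) (Pseq D E k) \<and> Pseq D E k \<subseteq> D \<times> E \<and> Pseq D E k \<subseteq> Pseq D E (Suc k)
   \<and> from_nat_into D k \<in> fst ` Pseq D E (Suc k) \<and> from_nat_into E k \<in> snd ` Pseq D E (Suc k)"
proof (induction k)
  case 0
  have g0: "good (rr 0) (Pseq D E 0)" unfolding good_def Inv_def rr_def by auto
  have s0: "Pseq D E 0 \<subseteq> D \<times> E" using D0 E0 by auto
  from step[OF g0 s0] g0 s0 show ?case by (simp only: Pseq.simps(2))
next
  case (Suc k)
  then have "good (rr (Suc k)) (Pseq D E (Suc k)) \<and> Pseq D E (Suc k) \<subseteq> D \<times> E"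
    using step[of k "Pseq D E k"] by (simp only: Pseq.simps(2))
  then show ?case using step[of "Suc k" "Pseq D E (Suc k)"] by (simp only: Pseq.simps(2)[of D E "Suc k"])
qed

definition RR where "RR = (\<Union>k. Pseq D E k)"
definition gg where "gg x = (SOME y. (x,y) \<in> RR)"

lemma Pseq_mono: "k \<le> l \<Longrightarrow> Pseq D E k \<subseteq> Pseq D E l"
  using lift_Suc_mono_le[of "Pseq D E"] Pseq_props by blast

lemma RR_inv: "Inv (1/2) RR"
  unfolding Inv_def
proof (intro allI impI)
  fix a a' b b' assume h: "(a,a') \<in> RR" "(b,b') \<in> RR" "a \<le> b"
  then obtain k l where "(a,a') \<in> Pseq D E k" "(b,b') \<in> Pseq D E l" unfolding RR_def by blast
  then have "(a,a') \<in> Pseq D E (max k l)" "(b,b') \<in> Pseq D E (max k l)"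
    using Pseq_mono[of k "max k l"] Pseq_mono[of l "max k l"] by auto
  moreover have "Inv (1/2) (Pseq D E (max k l))"
    using Pseq_props[of "max k l"] Inv_mono[of "rr (max k l)" _ "1/2"] rr_props(6)[of "max k l"]
    unfolding good_def by auto
  ultimately show "a' \<le> b' \<and> 1/2 * (b - a) \<le> b' - a' \<and> 1/2 * (b' - a') \<le> b - a"
    using InvD h(3) by blast
qed

lemma RR_sub: "RR \<subseteq> D \<times> E" unfolding RR_def using Pseq_props by blast

lemma RR_fst: "fst ` RR = D"
proof
  show "fst ` RR \<subseteq> D" using RR_sub by auto
  show "D \<subseteq> fst ` RR"
  proof
    fix x assume "x \<in> D"
    then obtain k where "x = from_nat_into D k" using range_from_nat_into[of D] cD by (metis empty_iff rangeE)
    then have "x \<in> fst ` Pseq D E (Suc k)" using Pseq_props by blast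
    then show "x \<in> fst ` RR" unfolding RR_def by blast
  qed
qed

lemma RR_snd: "snd ` RR = E"
proof
  show "snd ` RR \<subseteq> E" using RR_sub by auto
  show "E \<subseteq> snd ` RR"
  proof
    fix x assume "x \<in> E"
    then obtain k where "x = from_nat_into E k" using range_from_nat_into[of E] cE by (metis empty_iff rangeE)
    then have "x \<in> snd ` Pseq D E (Suc k)" using Pseq_props by blast
    then show "x \<in> snd ` RR" unfolding RR_def by blast
  qed
qed

lemma gg_RR: "x \<in> D \<Longrightarrow> (x, gg x) \<in> RR"
  unfolding gg_def using RR_fst by (metis (no_types, lifting) fst_conv imageE prod.collapse someI)

lemma gg_unique: "(x,y) \<in> RR \<Longrightarrow> gg x = y"
proof -
  assume h: "(x,y) \<in> RR"
  then have "x \<in> D" using RR_sub by auto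
  from gg_RR[OF this] h show ?thesis using InvD(1)[OF RR_inv] by (meson order_antisym order_refl)
qed

lemma gg_img: "gg ` D = E"
proof
  show "gg ` D \<subseteq> E" using gg_RR RR_sub by blast
  show "E \<subseteq> gg ` D"
  proof
    fix y assume "y \<in> E"
    then obtain x where "(x,y) \<in> RR" using RR_snd by force
    then show "y \<in> gg ` D" using gg_unique RR_sub by force
  qed
qed

lemma gg_bounds:
  assumes "x \<in> D" "y \<in> D" "x \<le> y"
  shows "gg x \<le> gg y" "(y - x)/2 \<le> gg y - gg x" "gg y - gg x \<le> 2 * (y - x)"
  using InvD[OF RR_inv gg_RR[OF assms(1)] gg_RR[OF assms(2)] assms(3)] by auto

lemma gg0: "gg 0 = 0" and gg1: "gg 1 = 1"
proof -
  have "(0,0) \<in> Pseq D E 0" "(1,1) \<in> Pseq D E 0" by auto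
  then have "(0,0) \<in> RR" "(1,1) \<in> RR" unfolding RR_def by blast+
  then show "gg 0 = 0" "gg 1 = 1" using gg_unique by auto
qed

lemma closureD: "closure D = {0..1}"
proof
  show "closure D \<subseteq> {0..1}" using D01 closure_minimal by blast
  show "{0..1} \<subseteq> closure D"
  proof
    fix x :: real assume x: "x \<in> {0..1}"
    show "x \<in> closure D" unfolding closure_approachable
    proof (intro allI impI)
      fix e :: real assume e: "0 < e"
      have "\<exists>y\<in>D. max 0 (x - e) < y \<and> y < min 1 (x + e)"
        using dD unfolding dense01_def
      proof (elim allE impE)
        show "0 \<le> max 0 (x - e)" "min 1 (x + e) \<le> 1" by auto
        show "max 0 (x - e) < min 1 (x + e)" using x e by auto
      qed
      then obtain y where "y \<in> D" "max 0 (x - e) < y" "y < min 1 (x + e)" by blast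
      then show "\<exists>y\<in>D. dist y x < e" by (intro bexI[of _ y]) (auto simp: dist_real_def)
    qed
  qed
qed

lemma gg_lip: "lipschitz_on 2 D gg"
  unfolding lipschitz_on_def
proof (intro conjI ballI)
  fix x y assume "x \<in> D" "y \<in> D"
  then show "dist (gg x) (gg y) \<le> 2 * dist x y"
    using gg_bounds[of x y] gg_bounds[of y x] by (cases "x \<le> y") (auto simp: dist_real_def)
qed simp

lemma h_exists:
  "\<exists>h. continuous_on {0..1} h \<and> h ` D = E \<and> h 0 = 0 \<and> h 1 = 1 \<and>
     (\<forall>x\<in>{0..1}. \<forall>y\<in>{0..1}. x \<le> y \<longrightarrow> (y - x)/2 \<le> h y - h x \<and> h y - h x \<le> 2 * (y - x))"
proof -
  obtain h where hl: "lipschitz_on 2 {0..1} h" and hg: "\<And>x. x \<in> D \<Longrightarrow> h x = gg x"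
    using lipschitz_extend_closure[OF gg_lip] closureD by auto
  have hc: "continuous_on {0..1} h" using lipschitz_on_continuous_on[OF hl] .
  have hD: "h ` D = E" using hg gg_img by (metis image_cong)
  have h0: "h 0 = 0" using hg[of 0] gg0 D0 by simp
  have h1: "h 1 = 1" using hg[of 1] gg1 D0 by simp
  have c1: "continuous_on ({0..1}\<times>{0..1}) (\<lambda>p. h (fst p))"
    by (rule continuous_on_compose2[OF hc continuous_on_fst[OF continuous_on_id]]) auto
  have c2: "continuous_on ({0..1}\<times>{0..1}) (\<lambda>p. h (snd p))"
    by (rule continuous_on_compose2[OF hc continuous_on_snd[OF continuous_on_id]]) auto
  have cF: "continuous_on (closure (D \<times> D)) (\<lambda>p. (h (snd p) - h (fst p)) * (snd p - fst p) - (snd p - fst p)^2/2)"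
    unfolding closure_Times closureD
    by (intro continuous_intros c1 c2) auto
  have low: "(h y - h x) * (y - x) - (y - x)^2/2 \<ge> 0" if "x \<in> {0..1}" "y \<in> {0..1}" for x y
  proof -
    have xy: "(x,y) \<in> closure (D \<times> D)" unfolding closure_Times closureD using that by auto
    have pt: "(h b - h a) * (b - a) - (b - a)^2/2 \<ge> 0" if ab: "a \<in> D" "b \<in> D" for a b
    proof (cases "a \<le> b")
      case True
      from gg_bounds(2)[OF ab True] have "(b - a)/2 * (b - a) \<le> (h b - h a) * (b - a)"
        using hg ab True by (intro mult_right_mono) auto
      then show ?thesis by (simp add: power2_eq_square)
    next
      case False
      from gg_bounds(2)[OF ab(2,1)] False have "(a - b)/2 * (a - b) \<le> (h a - h b) * (a - b)"
        using hg ab by (intro mult_right_mono) auto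
      then show ?thesis by (simp add: power2_eq_square algebra_simps)
    qed
    from continuous_ge_on_closure[OF cF xy, of 0] pt show ?thesis by auto
  qed
  have bounds: "(y - x)/2 \<le> h y - h x \<and> h y - h x \<le> 2 * (y - x)"
    if "x \<in> {0..1}" "y \<in> {0..1}" "x \<le> y" for x y
  proof
    have "dist (h y) (h x) \<le> 2 * dist y x" using hl that unfolding lipschitz_on_def by auto
    then show "h y - h x \<le> 2 * (y - x)" using that by (auto simp: dist_real_def)
    show "(y - x)/2 \<le> h y - h x"
    proof (cases "x = y")
      case False
      then have yx: "y - x > 0" using that by simp
      have "(y - x)/2 * (y - x) \<le> (h y - h x) * (y - x)" using low[OF that(1,2)] by (simp add: power2_eq_square)
      then show ?thesis using yx by (simp add: mult_le_cancel_right)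
    qed simp
  qed
  show ?thesis using hc hD h0 h1 bounds by blast
qed
end

lemma sin_lower: fixes v :: real assumes "0 \<le> v" "v \<le> pi/2" shows "v/2 \<le> sin v"
proof -
  have "\<bar>sin v - (\<Sum>m<3. sin_coeff m * v ^ m)\<bar> \<le> inverse (fact 3) * \<bar>v\<bar> ^ 3"
    by (rule Maclaurin_sin_bound)
  moreover have "(\<Sum>m<3. sin_coeff m * v ^ m) = v"
    by (simp add: eval_nat_numeral sin_coeff_def)
  ultimately have a: "sin v \<ge> v - v^3/6" using assms by (simp add: eval_nat_numeral abs_if split: if_splits)
  have "pi \<le> 3.2" using pi_approx by simp
  then have v16: "v \<le> 1.6" using assms by simp
  have "v^2 \<le> 1.6^2" using v16 assms by (intro power_mono) auto
  then have v3: "v^2 \<le> 3" by (simp add: power2_eq_square)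
  have "v * v^2 \<le> v * 3" using assms v3 by (intro mult_left_mono) auto
  then have "v^3/6 \<le> v/2" by (simp add: power2_eq_square power3_eq_cube)
  then show ?thesis using a by linarith
qed

lemma dist_cis: "dist (cis a) (cis b) = 2 * \<bar>sin ((a - b)/2)\<bar>"
proof -
  have "cis a - cis b = cis b * (cis (a - b) - 1)"
    by (simp add: algebra_simps cis_mult)
  then have "dist (cis a) (cis b) = norm (cis (a - b) - 1)" by (simp add: dist_norm norm_mult)
  also have "\<dots> = sqrt ((cos (a - b) - 1)^2 + (sin (a - b))^2)"
    by (simp add: cmod_def)
  also have "(cos (a - b) - 1)^2 + (sin (a - b))^2 = 2 - 2 * cos (a - b)"
    by (simp add: power2_diff sin_squared_eq algebra_simps power2_eq_square)
  also have "cos (a - b) = 1 - 2 * sin ((a - b)/2) ^ 2"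
  proof -
    have "2 * ((a-b)/2) = a - b" by simp
    then show ?thesis by (metis cos_double_sin)
  qed
  also have "2 - 2 * (1 - 2 * sin ((a - b)/2) ^ 2) = (2 * sin ((a - b)/2))^2" by (simp add: algebra_simps power2_eq_square)
  also have "sqrt \<dots> = \<bar>2 * sin ((a - b)/2)\<bar>" by (rule real_sqrt_abs)
  also have "\<dots> = 2 * \<bar>sin ((a - b)/2)\<bar>" by (simp add: abs_mult)
  finally show ?thesis .
qed

definition rho :: "real \<Rightarrow> real" where "rho u = min u (1 - u)"

lemma chord_bounds:
  fixes s t :: real
  assumes "s \<in> {0..1}" "t \<in> {0..1}"
  shows "pi * rho (\<bar>s - t\<bar>) \<le> dist (cis (2 * pi * s)) (cis (2 * pi * t))"
    "dist (cis (2 * pi * s)) (cis (2 * pi * t)) \<le> 2 * pi * rho (\<bar>s - t\<bar>)"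
proof -
  define u where "u = \<bar>s - t\<bar>"
  have u01: "0 \<le> u" "u \<le> 1" using assms unfolding u_def by auto
  have d: "dist (cis (2 * pi * s)) (cis (2 * pi * t)) = 2 * sin (pi * u)"
  proof -
    have "dist (cis (2 * pi * s)) (cis (2 * pi * t)) = 2 * \<bar>sin (pi * (s - t))\<bar>"
    proof -
      have e: "(2 * pi * s - 2 * pi * t)/2 = pi * (s - t)" by (simp add: field_simps)
      show ?thesis unfolding dist_cis e ..
    qed
    also have "\<bar>sin (pi * (s - t))\<bar> = sin (pi * u)"
    proof -
      have "\<bar>sin (pi * (s - t))\<bar> = \<bar>sin (pi * u)\<bar>"
      proof (cases "s \<le> t")
        case True then have "pi * (s - t) = - (pi * u)" unfolding u_def by (simp add: algebra_simps)
        then show ?thesis by (simp only: sin_minus abs_minus_cancel)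
      next
        case False then have "pi * (s - t) = pi * u" unfolding u_def by simp
        then show ?thesis by simp
      qed
      also have "\<dots> = sin (pi * u)" using u01 by (intro abs_of_nonneg sin_ge_zero) auto
      finally show ?thesis .
    qed
    finally show ?thesis .
  qed
  have rs: "sin (pi * u) = sin (pi * rho u)"
  proof (cases "u \<le> 1 - u")
    case True then show ?thesis by (simp add: rho_def)
  next
    case False
    then have "rho u = 1 - u" by (simp add: rho_def)
    then have "pi * rho u = pi - pi * u" by (simp add: right_diff_distrib)
    then show ?thesis by (simp only: sin_pi_minus)
  qed
  have r0: "0 \<le> rho u" "rho u \<le> 1/2" using u01 by (auto simp: rho_def min_def)
  have v0: "0 \<le> pi * rho u" "pi * rho u \<le> pi/2" using r0 pi_gt_zero by (auto intro: mult_left_mono[of _ "1/2" pi, simplified])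
  have "pi * rho u / 2 \<le> sin (pi * rho u)" by (rule sin_lower[OF v0])
  then show "pi * rho (\<bar>s - t\<bar>) \<le> dist (cis (2 * pi * s)) (cis (2 * pi * t))" using d rs u_def by simp
  have "sin (pi * rho u) \<le> pi * rho u" by (rule sin_x_le_x[OF v0(1)])
  then show "dist (cis (2 * pi * s)) (cis (2 * pi * t)) \<le> 2 * pi * rho (\<bar>s - t\<bar>)" using d rs u_def by simp
qed

lemma rho_compare:
  fixes h :: "real \<Rightarrow> real"
  assumes h0: "h 0 = 0" and h1: "h 1 = 1"
    and hb: "\<forall>x\<in>{0..1}. \<forall>y\<in>{0..1}. x \<le> y \<longrightarrow> (y - x)/2 \<le> h y - h x \<and> h y - h x \<le> 2 * (y - x)"
    and st: "s \<in> {0..1}" "t \<in> {0..1}"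
  shows "rho (\<bar>s - t\<bar>) \<le> 2 * rho (\<bar>h s - h t\<bar>)" "rho (\<bar>h s - h t\<bar>) \<le> 2 * rho (\<bar>s - t\<bar>)"
proof -
  have main: "rho (\<bar>s - t\<bar>) \<le> 2 * rho (\<bar>h s - h t\<bar>) \<and> rho (\<bar>h s - h t\<bar>) \<le> 2 * rho (\<bar>s - t\<bar>)"
    if st: "s \<in> {0..1}" "t \<in> {0..1}" "s \<le> t" for s t
  proof -
    have 1: "(t - s)/2 \<le> h t - h s \<and> h t - h s \<le> 2 * (t - s)" using hb st by auto
    have 2: "(s - 0)/2 \<le> h s - h 0 \<and> h s - h 0 \<le> 2 * (s - 0)" using hb[rule_format, of 0 s] st by auto
    have 3: "(1 - t)/2 \<le> h 1 - h t \<and> h 1 - h t \<le> 2 * (1 - t)" using hb[rule_format, of t 1] st by auto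
    show ?thesis using 1 2 3 h0 h1 st(3) unfolding rho_def by (auto simp: abs_if min_def)
  qed
  have "rho (\<bar>s - t\<bar>) \<le> 2 * rho (\<bar>h s - h t\<bar>) \<and> rho (\<bar>h s - h t\<bar>) \<le> 2 * rho (\<bar>s - t\<bar>)"
  proof (cases "s \<le> t")
    case True then show ?thesis using main[OF st] by auto
  next
    case False
    have e: "\<bar>t - s\<bar> = \<bar>s - t\<bar>" "\<bar>h t - h s\<bar> = \<bar>h s - h t\<bar>" by (rule abs_minus_commute)+
    from False show ?thesis using main[OF st(2,1)] unfolding e by auto
  qed
  then show "rho (\<bar>s - t\<bar>) \<le> 2 * rho (\<bar>h s - h t\<bar>)" "rho (\<bar>h s - h t\<bar>) \<le> 2 * rho (\<bar>s - t\<bar>)" by auto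
qed



definition Dset :: "nat \<Rightarrow> real set" where
  "Dset b = {real p / real b ^ n | p n. p \<le> b ^ n}"

lemma Dset_props:
  assumes b: "b \<ge> 2"
  shows "countable (Dset b)" "Dset b \<subseteq> {0..1}" "0 \<in> Dset b" "1 \<in> Dset b" "dense01 (Dset b)"
proof -
  have "Dset b \<subseteq> (\<lambda>(p,n). real p / real b ^ n) ` UNIV" unfolding Dset_def by auto
  then show "countable (Dset b)" by (rule countable_subset) simp
  show "Dset b \<subseteq> {0..1}"
  proof
    fix x assume "x \<in> Dset b"
    then obtain p n where x: "x = real p / real b ^ n" "p \<le> b ^ n" unfolding Dset_def by auto
    have pos: "(0::real) < real b ^ n" using b by simp
    have "real p \<le> real b ^ n" using x(2) by (metis of_nat_le_iff of_nat_power)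
    then show "x \<in> {0..1}" using x pos by auto
  qed
  show "0 \<in> Dset b" unfolding Dset_def by (auto intro!: exI[of _ 0])
  show "1 \<in> Dset b" unfolding Dset_def by (auto intro!: exI[of _ 1] exI[of _ 0])
  show "dense01 (Dset b)" unfolding dense01_def
  proof (intro allI impI)
    fix u v :: real assume uv: "0 \<le> u" "u < v" "v \<le> 1"
    have b1: "(1::real) < real b" using b by simp
    obtain n where n: "1 / (v - u) < real b ^ n" using real_arch_pow[OF b1] by blast
    have pos: "(0::real) < real b ^ n" using b by simp
    have n': "1 < (v - u) * real b ^ n" using n uv(2) by (simp add: field_simps)
    define p where "p = nat \<lfloor>u * real b ^ n\<rfloor> + 1"
    have fl: "0 \<le> \<lfloor>u * real b ^ n\<rfloor>" using uv(1) pos by simp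
    have rp: "real p = of_int \<lfloor>u * real b ^ n\<rfloor> + 1" unfolding p_def using fl by simp
    have p1: "u * real b ^ n < real p" unfolding rp by linarith
    have p2: "real p \<le> u * real b ^ n + 1" unfolding rp by linarith
    have lo: "u < real p / real b ^ n" using p1 pos by (simp add: field_simps)
    have hi: "real p / real b ^ n < v" using p2 n' pos by (simp add: field_simps)
    have "real p / real b ^ n \<le> 1" using hi uv(3) by simp
    then have "real p \<le> real b ^ n" using pos by (simp add: field_simps)
    then have "p \<le> b ^ n" by (metis of_nat_le_iff of_nat_power)
    then have "real p / real b ^ n \<in> Dset b" unfolding Dset_def by blast
    then show "\<exists>y\<in>Dset b. u < y \<and> y < v" using lo hi by blast
  qed
qed

lemma adic_eq:
  assumes b: "b \<ge> 1"
  shows "adic_points b = (\<lambda>s. cis (2 * pi * s)) ` Dset b"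
proof
  show "(\<lambda>s. cis (2 * pi * s)) ` Dset b \<subseteq> adic_points b"
  proof
    fix z assume "z \<in> (\<lambda>s. cis (2 * pi * s)) ` Dset b"
    then obtain p n where "z = cis (2 * pi * (real p / real b ^ n))" unfolding Dset_def by auto
    then show "z \<in> adic_points b" unfolding adic_points_def by blast
  qed
  show "adic_points b \<subseteq> (\<lambda>s. cis (2 * pi * s)) ` Dset b"
  proof
    fix z assume "z \<in> adic_points b"
    then obtain p n where z: "z = cis (2 * pi * (real p / real b ^ n))" unfolding adic_points_def by auto
    define q where "q = p mod b ^ n"
    define k where "k = p div b ^ n"
    have bn: "0 < b ^ n" using b by simp
    have pq: "p = k * b ^ n + q" unfolding q_def k_def by (rule div_mult_mod_eq[symmetric])
    have posr: "(0::real) < real b ^ n" using b by simp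
    have "real p / real b ^ n = real k + real q / real b ^ n"
      unfolding pq using posr by (simp add: field_simps)
    then have e: "2 * pi * (real p / real b ^ n) = 2 * pi * real k + 2 * pi * (real q / real b ^ n)"
      by (simp add: algebra_simps)
    have "z = cis (2 * pi * real k + 2 * pi * (real q / real b ^ n))" unfolding z e ..
    also have "\<dots> = cis (2 * pi * real k) * cis (2 * pi * (real q / real b ^ n))" by (rule cis_mult[symmetric])
    also have "cis (2 * pi * real k) = 1" by (rule cis_multiple_2pi) simp
    finally have z': "z = cis (2 * pi * (real q / real b ^ n))" by simp
    have "q \<le> b ^ n" unfolding q_def using bn by (simp add: order.strict_implies_order)
    then have "real q / real b ^ n \<in> Dset b" unfolding Dset_def by blast
    then show "z \<in> (\<lambda>s. cis (2 * pi * s)) ` Dset b" using z' by blast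
  qed
qed

lemma circle_iff: "z \<in> circle \<longleftrightarrow> norm z = 1"
  unfolding circle_def by (simp add: dist_norm)

lemma circle_param:
  assumes "z \<in> circle"
  shows "\<exists>s. 0 \<le> s \<and> s < 1 \<and> z = cis (2 * pi * s)"
proof -
  have nz: "norm z = 1" using assms circle_iff by simp
  then have z0: "z \<noteq> 0" by auto
  have za: "cis (Arg z) = z" using cis_Arg[OF z0] nz by (simp add: sgn_div_norm)
  have ab: "- pi < Arg z" "Arg z \<le> pi" using Arg_bounded by auto
  show ?thesis
  proof (cases "0 \<le> Arg z")
    case True
    define s where "s = Arg z / (2 * pi)"
    have "2 * pi * s = Arg z" unfolding s_def by simp
    moreover have "0 \<le> s" "s < 1" unfolding s_def using True ab pi_gt_zero by (auto simp: field_simps) (smt (verit) pi_gt_zero)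
    ultimately show ?thesis using za by metis
  next
    case False
    define s where "s = Arg z / (2 * pi) + 1"
    have "2 * pi * s = Arg z + 2 * pi" unfolding s_def by (simp add: algebra_simps)
    then have "cis (2 * pi * s) = z" using za by (simp add: cis_mult[symmetric])
    moreover have "0 \<le> s" "s < 1" unfolding s_def using False ab pi_gt_zero by (auto simp: field_simps)
    ultimately show ?thesis by metis
  qed
qed

lemma cis_inj01:
  assumes "s \<in> {0..<1}" "t \<in> {0..<1}" "cis (2 * pi * s) = cis (2 * pi * t)"
  shows "s = t"
proof -
  have "pi * rho (\<bar>s - t\<bar>) \<le> 0" using chord_bounds(1)[of s t] assms by auto
  then have "rho (\<bar>s - t\<bar>) \<le> 0" using pi_gt_zero by (simp add: mult_le_0_iff)
  then show ?thesis using assms(1,2) unfolding rho_def by (auto simp: min_def split: if_splits)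
qed

lemma control_16: "control_function (\<lambda>t. 16 * t)"
  unfolding control_function_def homeomorphism_def
proof (intro exI[of _ "\<lambda>t. t / 16"] conjI)
  show "(\<lambda>t::real. 16 * t) ` {0..} = {0..}"
  proof
    show "(\<lambda>t::real. 16 * t) ` {0..} \<subseteq> {0..}" by auto
    show "{0..} \<subseteq> (\<lambda>t::real. 16 * t) ` {0..}"
    proof
      fix x :: real assume "x \<in> {0..}"
      then show "x \<in> (\<lambda>t. 16 * t) ` {0..}" by (intro image_eqI[of x _ "x/16"]) auto
    qed
  qed
  show "(\<lambda>t::real. t / 16) ` {0..} = {0..}"
  proof
    show "(\<lambda>t::real. t / 16) ` {0..} \<subseteq> {0..}" by auto
    show "{0..} \<subseteq> (\<lambda>t::real. t / 16) ` {0..}"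
    proof
      fix x :: real assume "x \<in> {0..}"
      then show "x \<in> (\<lambda>t. t / 16) ` {0..}" by (intro image_eqI[of x _ "16 * x"]) auto
    qed
  qed
qed (auto intro!: continuous_intros)

theorem proposition3p4:
  fixes d e :: nat
  assumes "d \<ge> 2" and "e \<ge> 2"
  shows "\<exists>\<phi> \<psi>. homeomorphism circle circle \<phi> \<psi> \<and> quasisymmetric_on circle \<phi> \<and>
           \<phi> ` adic_points d = adic_points e"
proof -
  note Dd = Dset_props[OF assms(1)] and De = Dset_props[OF assms(2)]
  interpret setting "Dset d" "Dset e"
    using Dd De by unfold_locales auto
  obtain h where hc: "continuous_on {0..1} h" and hD: "h ` Dset d = Dset e"
    and h0: "h 0 = 0" and h1: "h 1 = 1"
    and hb: "\<forall>x\<in>{0..1}. \<forall>y\<in>{0..1}. x \<le> y \<longrightarrow> (y - x)/2 \<le> h y - h x \<and> h y - h x \<le> 2 * (y - x)"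
    using h_exists by blast
  have hr: "h s \<in> {0..1}" if "s \<in> {0..1}" for s
    using hb[rule_format, of 0 s] hb[rule_format, of s 1] that h0 h1 by auto
  define lift where "lift z = (SOME s. 0 \<le> s \<and> s < 1 \<and> z = cis (2 * pi * s))" for z
  define \<phi> where "\<phi> z = cis (2 * pi * h (lift z))" for z
  have lift: "0 \<le> lift z \<and> lift z < 1 \<and> z = cis (2 * pi * lift z)" if "z \<in> circle" for z
    unfolding lift_def using someI_ex[OF circle_param[OF that]] .
  have lift_cis: "lift (cis (2 * pi * s)) = s" if "s \<in> {0..<1}" for s
  proof -
    have c: "cis (2 * pi * s) \<in> circle" by (simp add: circle_iff)
    from lift[OF c] that show ?thesis using cis_inj01[of "lift (cis (2 * pi * s))" s] by auto
  qed
  have phi_cis: "\<phi> (cis (2 * pi * s)) = cis (2 * pi * h s)" if "s \<in> {0..1}" for s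
  proof (cases "s = 1")
    case True
    have "cis (2 * pi * s) = cis (2 * pi * 0)" using True by simp
    then have "\<phi> (cis (2 * pi * s)) = cis (2 * pi * h 0)" unfolding \<phi>_def using lift_cis[of 0] by simp
    then show ?thesis using True h0 h1 by simp
  next
    case False
    then show ?thesis unfolding \<phi>_def using lift_cis[of s] that by simp
  qed
  have key: "dist (\<phi> z) (\<phi> w) \<le> 4 * dist z w \<and> dist z w \<le> 4 * dist (\<phi> z) (\<phi> w)"
    if zw: "z \<in> circle" "w \<in> circle" for z w
  proof -
    obtain s where s: "s \<in> {0..1}" "z = cis (2 * pi * s)" using lift[OF zw(1)] by fastforce
    obtain t where t: "t \<in> {0..1}" "w = cis (2 * pi * t)" using lift[OF zw(2)] by fastforce
    have pz: "\<phi> z = cis (2 * pi * h s)" "\<phi> w = cis (2 * pi * h t)" using phi_cis s t by auto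
    note c1 = chord_bounds[OF s(1) t(1)] and c2 = chord_bounds[OF hr[OF s(1)] hr[OF t(1)]]
    note r = rho_compare[OF h0 h1 hb s(1) t(1)]
    have "dist (\<phi> z) (\<phi> w) \<le> 2 * pi * rho (\<bar>h s - h t\<bar>)" using c2 pz by simp
    also have "\<dots> \<le> 2 * pi * (2 * rho (\<bar>s - t\<bar>))" using r(2) pi_gt_zero by (intro mult_left_mono) auto
    also have "\<dots> = 4 * (pi * rho (\<bar>s - t\<bar>))" by simp
    also have "\<dots> \<le> 4 * dist z w" using c1 s t by simp
    finally have A: "dist (\<phi> z) (\<phi> w) \<le> 4 * dist z w" .
    have "dist z w \<le> 2 * pi * rho (\<bar>s - t\<bar>)" using c1 s t by simp
    also have "\<dots> \<le> 2 * pi * (2 * rho (\<bar>h s - h t\<bar>))" using r(1) pi_gt_zero by (intro mult_left_mono) auto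
    also have "\<dots> = 4 * (pi * rho (\<bar>h s - h t\<bar>))" by simp
    also have "\<dots> \<le> 4 * dist (\<phi> z) (\<phi> w)" using c2 pz by simp
    finally show ?thesis using A by simp
  qed
  have lip: "lipschitz_on 4 circle \<phi>" unfolding lipschitz_on_def using key by auto
  have cont: "continuous_on circle \<phi>" by (rule lipschitz_on_continuous_on[OF lip])
  have img: "\<phi> ` circle = circle"
  proof
    show "\<phi> ` circle \<subseteq> circle" unfolding \<phi>_def by (auto simp: circle_iff)
    show "circle \<subseteq> \<phi> ` circle"
    proof
      fix w assume w: "w \<in> circle"
      obtain u where u: "0 \<le> u" "u < 1" "w = cis (2 * pi * u)" using circle_param[OF w] by blast
      obtain s where s: "0 \<le> s" "s \<le> 1" "h s = u"
        using IVT'[of h 0 u 1] hc h0 h1 u by auto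
      have "\<phi> (cis (2 * pi * s)) = w" using phi_cis[of s] s u by simp
      moreover have "cis (2 * pi * s) \<in> circle" by (simp add: circle_iff)
      ultimately show "w \<in> \<phi> ` circle" by blast
    qed
  qed
  have inj: "inj_on \<phi> circle"
  proof (rule inj_onI)
    fix z w assume "z \<in> circle" "w \<in> circle" "\<phi> z = \<phi> w"
    then show "z = w" using key[of z w] by simp
  qed
  have comp: "compact circle" unfolding circle_def by simp
  obtain \<psi> where hom: "homeomorphism circle circle \<phi> \<psi>"
    using homeomorphism_compact[OF comp cont img inj] by blast
  have qs: "quasisymmetric_on circle \<phi>"
    unfolding quasisymmetric_on_def
  proof (intro exI[of _ "\<lambda>t. 16 * t"] conjI control_16 ballI allI impI)
    fix x a b and t :: real assume xab: "x \<in> circle" "a \<in> circle" "b \<in> circle" and t: "0 \<le> t"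
      and le: "dist x a \<le> t * dist x b"
    have "dist (\<phi> x) (\<phi> a) \<le> 4 * dist x a" using key[OF xab(1,2)] by simp
    also have "\<dots> \<le> 4 * (t * dist x b)" using le by simp
    also have "\<dots> \<le> 4 * (t * (4 * dist (\<phi> x) (\<phi> b)))"
      using key[OF xab(1,3)] t by (intro mult_left_mono) auto
    finally show "dist (\<phi> x) (\<phi> a) \<le> 16 * t * dist (\<phi> x) (\<phi> b)" by simp
  qed
  have adic: "\<phi> ` adic_points d = adic_points e"
  proof -
    have "\<phi> ` adic_points d = \<phi> ` (\<lambda>s. cis (2 * pi * s)) ` Dset d"
      using adic_eq[of d] assms by simp
    also have "\<dots> = (\<lambda>s. cis (2 * pi * s)) ` h ` Dset d"
      unfolding image_image using phi_cis Dd(2) by (intro image_cong) auto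
    also have "\<dots> = adic_points e" using hD adic_eq[of e] assms by simp
    finally show ?thesis .
  qed
  show ?thesis using hom qs adic by blast
qed

end
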